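(* If $G$ is an oriented graph derived from a Burling tree $(T,r,\ell,c)$, then $G$ can be derived from a Burling tree $(T',r',\ell',c')$ such that, for every $v\in V(T')$, $v\in V(G)$ if and only if $v$ is neither the root nor a last-born of $T'$. Moreover, for every arc $uv$ of $G$, $uv$ is a top (resp. bottom) arc of $G$ with respect to $T$ if and only if it is a top (resp. bottom) arc of $G$ with respect to $T'$.
   Context: Oriented graphs are finite, without loops, multiple arcs or pairs of opposite arcs. In a rooted tree $T$ with root $r$, each non-root vertex $v$ has a parent $p(v)$; children, leaves, ancestors and descendants are as usual. A branch is a sequence $v_1\dots v_k$ ($k\ge0$) with $v_i$ the parent of $v_{i+1}$; it starts at $v_1$. A Burling tree is a 4-tuple $(T,r,\ell,c)$: $T$ a rooted tree with root $r$; $\ell$ assigns to each non-leaf vertex $v$ one of its children $\ell(v)$ (the last-born of $v$); $c$ assigns to every vertex $v$ that is neither the root nor a last-born the vertex-set of a (possibly empty) branch starting at $\ell(p(v))$, and $c(v)=\emptyset$ if $v$ is the root or a last-born. The oriented graph fully derived from it has vertex-set $V(T)$ and an arc $uv$ iff $v\in c(u)$; an oriented graph is derived from the Burling tree if it is an induced subgraph of the fully derived one (so $V(G)\subseteq V(T)$). If $G$ is derived from $T$ and $uv$ is an arc of $G$, then all out-neighbors of $u$ lie on one branch of $T$; $uv$ is a top arc with respect to $T$ if $v$ is the out-neighbor of $u$ closest in $T$ to the root, and a bottom arc with respect to $T$ if $v$ is the out-neighbor of $u$ furthest in $T$ from the root. *)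

theory Defs
  imports Main
begin

text \<open>A rooted tree is given by a finite vertex set V, a root r and a parent
function p (only meaningful on V - {r}).\<close>

definition rooted_tree :: "'a set \<Rightarrow> 'a \<Rightarrow> ('a \<Rightarrow> 'a) \<Rightarrow> bool" where
  "rooted_tree V r p \<longleftrightarrow> finite V \<and> r \<in> V \<and> (\<forall>v \<in> V - {r}. p v \<in> V)
     \<and> (\<forall>v \<in> V. \<exists>n. (p ^^ n) v = r)"

definition is_child :: "'a set \<Rightarrow> 'a \<Rightarrow> ('a \<Rightarrow> 'a) \<Rightarrow> 'a \<Rightarrow> 'a \<Rightarrow> bool" where
  "is_child V r p v w \<longleftrightarrow> w \<in> V \<and> w \<noteq> r \<and> p w = v"

definition is_leaf :: "'a set \<Rightarrow> 'a \<Rightarrow> ('a \<Rightarrow> 'a) \<Rightarrow> 'a \<Rightarrow> bool" where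
  "is_leaf V r p v \<longleftrightarrow> \<not> (\<exists>w. is_child V r p v w)"

definition is_branch_set :: "'a set \<Rightarrow> 'a \<Rightarrow> ('a \<Rightarrow> 'a) \<Rightarrow> 'a \<Rightarrow> 'a set \<Rightarrow> bool" where
  "is_branch_set V r p x S \<longleftrightarrow> S = {} \<or>
     (\<exists>xs. xs \<noteq> [] \<and> hd xs = x \<and> x \<in> V \<and> set xs = S \<and>
        (\<forall>i. Suc i < length xs \<longrightarrow> is_child V r p (xs ! i) (xs ! Suc i)))"

definition is_last_born :: "'a set \<Rightarrow> 'a \<Rightarrow> ('a \<Rightarrow> 'a) \<Rightarrow> ('a \<Rightarrow> 'a) \<Rightarrow> 'a \<Rightarrow> bool" where
  "is_last_born V r p l v \<longleftrightarrow> (\<exists>u \<in> V. \<not> is_leaf V r p u \<and> v = l u)"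

text \<open>Burling tree (T, r, l, c) with T = (V, p).\<close>
definition burling_tree ::
  "'a set \<Rightarrow> 'a \<Rightarrow> ('a \<Rightarrow> 'a) \<Rightarrow> ('a \<Rightarrow> 'a) \<Rightarrow> ('a \<Rightarrow> 'a set) \<Rightarrow> bool" where
  "burling_tree V r p l c \<longleftrightarrow> rooted_tree V r p
     \<and> (\<forall>v \<in> V. \<not> is_leaf V r p v \<longrightarrow> is_child V r p v (l v))
     \<and> (\<forall>v \<in> V. if v = r \<or> is_last_born V r p l v then c v = {}
                 else is_branch_set V r p (l (p v)) (c v))"

text \<open>G = (VG, AG) is derived from the Burling tree: an induced subgraph of the
fully derived graph.\<close>
definition derived ::
  "'a set \<Rightarrow> ('a \<times> 'a) set \<Rightarrow> 'a set \<Rightarrow> 'a \<Rightarrow> ('a \<Rightarrow> 'a) \<Rightarrow> ('a \<Rightarrow> 'a) \<Rightarrow> ('a \<Rightarrow> 'a set) \<Rightarrow> bool" where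
  "derived VG AG V r p l c \<longleftrightarrow> VG \<subseteq> V \<and> AG = {(u, v). u \<in> VG \<and> v \<in> VG \<and> v \<in> c u}"

definition depth :: "'a \<Rightarrow> ('a \<Rightarrow> 'a) \<Rightarrow> 'a \<Rightarrow> nat" where
  "depth r p v = (LEAST n. (p ^^ n) v = r)"

definition top_arc :: "('a \<times> 'a) set \<Rightarrow> 'a \<Rightarrow> ('a \<Rightarrow> 'a) \<Rightarrow> 'a \<Rightarrow> 'a \<Rightarrow> bool" where
  "top_arc AG r p u v \<longleftrightarrow> (u, v) \<in> AG \<and> (\<forall>w. (u, w) \<in> AG \<longrightarrow> depth r p v \<le> depth r p w)"

definition bottom_arc :: "('a \<times> 'a) set \<Rightarrow> 'a \<Rightarrow> ('a \<Rightarrow> 'a) \<Rightarrow> 'a \<Rightarrow> 'a \<Rightarrow> bool" where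
  "bottom_arc AG r p u v \<longleftrightarrow> (u, v) \<in> AG \<and> (\<forall>w. (u, w) \<in> AG \<longrightarrow> depth r p w \<le> depth r p v)"

end

theory Submission
  imports Defs "HOL-Library.Nat_Bijection"
begin


lemma depth_root: "depth r p r = 0"
  unfolding depth_def by (rule Least_eq_0) simp

lemma depth_reach: "rooted_tree V r p \<Longrightarrow> v \<in> V \<Longrightarrow> (p ^^ depth r p v) v = r"
  unfolding rooted_tree_def depth_def by (meson LeastI)

lemma depth_parent:
  assumes T: "rooted_tree V r p" and v: "v \<in> V" "v \<noteq> r"
  shows "depth r p v = Suc (depth r p (p v))"
proof -
  define n where "n = depth r p v"
  have n: "(p ^^ n) v = r" using depth_reach[OF T v(1)] n_def by simp
  have n0: "n \<noteq> 0" using n v by (cases n) auto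
  have a: "(p ^^ (n - 1)) (p v) = r" using n n0
    by (metis Suc_diff_1 bot_nat_0.not_eq_extremum comp_apply funpow_Suc_right)
  hence le: "depth r p (p v) \<le> n - 1" unfolding depth_def by (rule Least_le)
  have "(p ^^ (depth r p (p v))) (p v) = r" unfolding depth_def using a by (rule LeastI)
  hence "(p ^^ Suc (depth r p (p v))) v = r" by (simp add: funpow_Suc_right del: funpow.simps)
  hence "n \<le> Suc (depth r p (p v))" unfolding n_def depth_def by (rule Least_le)
  thus ?thesis using le n0 n_def by linarith
qed

lemma depth_zero: "rooted_tree V r p \<Longrightarrow> v \<in> V \<Longrightarrow> depth r p v = 0 \<Longrightarrow> v = r"
  using depth_reach[of V r p v] by simp

lemma depth_child: "rooted_tree V r p \<Longrightarrow> is_child V r p x y \<Longrightarrow> depth r p y = Suc (depth r p x)"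
  unfolding is_child_def using depth_parent by metis

lemma path_depth_less:
  assumes T: "rooted_tree V r p"
  shows "successively (is_child V r p) (x # zs) \<Longrightarrow> z \<in> set zs \<Longrightarrow> depth r p x < depth r p z"
proof (induction zs arbitrary: x)
  case Nil thus ?case by simp
next
  case (Cons y zs)
  have c: "is_child V r p x y" and s: "successively (is_child V r p) (y # zs)" using Cons.prems by auto
  have d: "depth r p y = Suc (depth r p x)" using depth_child[OF T c] .
  show ?case
  proof (cases "z = y")
    case True thus ?thesis using d by simp
  next
    case False
    hence "z \<in> set zs" using Cons.prems by simp
    from Cons.IH[OF s this] d show ?thesis by simp
  qed
qed

lemma successively_map_upt:
  assumes "\<And>i. s \<le> i \<Longrightarrow> Suc i < t \<Longrightarrow> P (g i) (g (Suc i))"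
  shows "successively P (map g [s..<t])"
  unfolding successively_conv_nth using assms by (auto simp: nth_upt)

fun gpAux :: "('a \<Rightarrow> 'a) \<Rightarrow> 'a set \<Rightarrow> nat \<Rightarrow> 'a \<Rightarrow> 'a option" where
  "gpAux p VG 0 y = None"
| "gpAux p VG (Suc n) y = (if p y \<in> VG then Some (p y) else gpAux p VG n (p y))"



locale constr =
  fixes V :: "'a set" and r :: 'a and p l :: "'a \<Rightarrow> 'a" and c :: "'a \<Rightarrow> 'a set"
    and VG :: "'a set" and AG :: "('a \<times> 'a) set" and f :: "nat \<Rightarrow> 'a" and idx :: "'a \<Rightarrow> nat"
  assumes B: "burling_tree V r p l c" and D: "derived VG AG V r p l c"
    and finj: "inj f" and fdisj: "range f \<inter> VG = {}" and idxinj: "inj_on idx VG"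
begin

definition "gpT y = gpAux p VG (depth r p y) y"
definition "pos x = 2 * depth r p x + (if is_last_born V r p l x then 1 else 0)"
definition "M = Suc (Max (pos ` VG))"
fun keyO :: "'a option \<Rightarrow> nat" where "keyO None = 0" | "keyO (Some g) = Suc (idx g)"
definition "headK k = (if k = 0 then f (prod_encode (0,0)) else inv_into VG idx (k - 1))"
definition "nodeK k i = (if i = 0 then headK k else f (prod_encode (k,i)))"
definition "rho = f (prod_encode (0,0))"
definition "Keys = keyO ` ({None} \<union> Some ` VG)"
definition "V' = {nodeK k i | k i. k \<in> Keys \<and> i \<le> M}"
definition "dec x = (if x \<in> VG then (Suc (idx x), 0) else prod_decode (inv f x))"
definition "p' x = (if x \<in> VG then nodeK (keyO (gpT x)) (pos x)
   else (case dec x of (k,i) \<Rightarrow> if i = 0 then x else nodeK k (i-1)))"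
definition "l' x = (case dec x of (k,i) \<Rightarrow> f (prod_encode (k, Suc i)))"
definition "blist v = (SOME xs. set xs = c v \<and> (xs \<noteq> [] \<longrightarrow> hd xs = l (p v) \<and>
    successively (is_child V r p) xs \<and> l (p v) \<in> V))"
primrec conv :: "'a option \<Rightarrow> nat \<Rightarrow> 'a list \<Rightarrow> 'a list" where
  "conv h s [] = []"
| "conv h s (x#xs) = (if x \<in> VG then map (nodeK (keyO h)) [s..<Suc (pos x)] @ x # conv (Some x) 1 xs
     else conv h s xs)"
definition "c' x = (if x \<in> VG then set (conv (gpT x) (Suc (pos x)) (blist x)) else {})"

lemma T: "rooted_tree V r p" using B unfolding burling_tree_def by simp
lemma VGV: "VG \<subseteq> V" using D unfolding derived_def by simp
lemma finVG: "finite VG" using VGV T unfolding rooted_tree_def using finite_subset by blast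
lemma pos_lt_M: "g \<in> VG \<Longrightarrow> pos g < M"
  unfolding M_def using finVG by (simp add: le_imp_less_Suc)
lemma fresh: "f z \<notin> VG" using fdisj by auto
lemma rho_notVG: "rho \<notin> VG" unfolding rho_def by (rule fresh)

lemma headK_None: "headK (keyO None) = rho" by (simp add: headK_def rho_def)
lemma headK_Some: "g \<in> VG \<Longrightarrow> headK (keyO (Some g)) = g"
  by (simp add: headK_def idxinj)

lemma Keys_cases: "k \<in> Keys \<Longrightarrow> (k = 0 \<Longrightarrow> P) \<Longrightarrow> (\<And>g. g \<in> VG \<Longrightarrow> k = Suc (idx g) \<Longrightarrow> P) \<Longrightarrow> P"
  unfolding Keys_def by auto

lemma nodeK_VG: "k \<in> Keys \<Longrightarrow> nodeK k i \<in> VG \<longleftrightarrow> (i = 0 \<and> k \<noteq> 0)"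
  by (erule Keys_cases) (auto simp: nodeK_def headK_def idxinj fresh)

lemma nodeK_inj: assumes "k \<in> Keys" "k' \<in> Keys" "nodeK k i = nodeK k' i'"
  shows "k = k' \<and> i = i'"
proof -
  have pe: "f (prod_encode a) = f (prod_encode b) \<Longrightarrow> a = b" for a b
    using finj inj_prod_encode by (metis injD)
  show ?thesis
  proof (cases "i = 0")
    case i: True
    show ?thesis
    proof (cases "i' = 0")
      case True
      with i assms show ?thesis
        by (auto elim!: Keys_cases simp: nodeK_def headK_def idxinj fresh
           dest: pe inj_onD[OF idxinj])
    next
      case False
      with i assms show ?thesis
        by (auto elim!: Keys_cases simp: nodeK_def headK_def idxinj fresh dest: pe)
    qed
  next
    case i: False
    show ?thesis
    proof (cases "i' = 0")
      case True
      with i assms show ?thesis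
        by (auto elim!: Keys_cases simp: nodeK_def headK_def idxinj fresh dest: pe)
    next
      case False
      with i assms show ?thesis
        by (auto simp: nodeK_def dest: pe)
    qed
  qed
qed

lemma dec_nodeK: "k \<in> Keys \<Longrightarrow> dec (nodeK k i) = (k, i)"
  by (erule Keys_cases) (auto simp: dec_def nodeK_def headK_def idxinj fresh finj)

lemma p'_succ: "k \<in> Keys \<Longrightarrow> p' (nodeK k (Suc i)) = nodeK k i"
  using nodeK_VG[of k "Suc i"] dec_nodeK[of k "Suc i"] by (simp add: p'_def)

lemma p'_VG: "g \<in> VG \<Longrightarrow> p' g = nodeK (keyO (gpT g)) (pos g)"
  by (simp add: p'_def)

lemma p'_rho: "p' rho = rho"
  using dec_nodeK[of 0 0] rho_notVG by (simp add: p'_def Keys_def nodeK_def headK_def rho_def)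

lemma l'_node: "k \<in> Keys \<Longrightarrow> l' (nodeK k i) = nodeK k (Suc i)"
  using dec_nodeK[of k i] by (simp add: l'_def nodeK_def)

lemma rho_node: "rho = nodeK 0 0" by (simp add: rho_def nodeK_def headK_def)
lemma zero_Keys: "0 \<in> Keys" by (simp add: Keys_def image_iff)
lemma VG_node: "g \<in> VG \<Longrightarrow> g = nodeK (Suc (idx g)) 0" by (simp add: nodeK_def headK_def idxinj)
lemma VG_Keys: "g \<in> VG \<Longrightarrow> Suc (idx g) \<in> Keys" unfolding Keys_def by (auto simp: image_iff)
lemma keyO_Keys: "h \<in> {None} \<union> Some ` VG \<Longrightarrow> keyO h \<in> Keys" unfolding Keys_def by auto

end

context constr begin

lemma pV: "y \<in> V \<Longrightarrow> y \<noteq> r \<Longrightarrow> p y \<in> V" using T unfolding rooted_tree_def by blast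

lemma gpT_rec: "y \<in> V \<Longrightarrow> y \<noteq> r \<Longrightarrow> gpT y = (if p y \<in> VG then Some (p y) else gpT (p y))"
  unfolding gpT_def using depth_parent[OF T] by simp

lemma gpAux_prop: "y \<in> V \<Longrightarrow> depth r p y = n \<Longrightarrow> gpAux p VG n y = Some g \<Longrightarrow> g \<in> VG \<and> depth r p g < depth r p y"
proof (induction n arbitrary: y)
  case 0 thus ?case by simp
next
  case (Suc m)
  have yr: "y \<noteq> r" using Suc.prems(2) depth_root[of r p] by auto
  have py: "p y \<in> V" using pV[OF Suc.prems(1) yr] .
  have d: "depth r p y = Suc (depth r p (p y))" using depth_parent[OF T Suc.prems(1) yr] .
  show ?case
  proof (cases "p y \<in> VG")
    case True thus ?thesis using Suc.prems d by simp
  next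
    case False
    hence "gpAux p VG m (p y) = Some g" using Suc.prems by simp
    from Suc.IH[OF py _ this] d Suc.prems(2) show ?thesis by simp
  qed
qed

lemma gpT_Some: "y \<in> V \<Longrightarrow> gpT y = Some g \<Longrightarrow> g \<in> VG \<and> depth r p g < depth r p y"
  unfolding gpT_def using gpAux_prop by blast

lemma gpT_range: "y \<in> V \<Longrightarrow> gpT y \<in> {None} \<union> Some ` VG"
  using gpT_Some by (cases "gpT y") auto

lemma keyO_gpT: "y \<in> V \<Longrightarrow> keyO (gpT y) \<in> Keys"
  using keyO_Keys gpT_range by blast

lemma finV': "finite V'"
proof -
  have "V' = (\<lambda>(k,i). nodeK k i) ` (Keys \<times> {..M})" unfolding V'_def by auto
  moreover have "finite Keys" unfolding Keys_def using finVG by simp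
  ultimately show ?thesis by simp
qed

lemma rho_V': "rho \<in> V'" unfolding V'_def using rho_node zero_Keys by blast
lemma VG_V': "g \<in> VG \<Longrightarrow> g \<in> V'" unfolding V'_def using VG_node VG_Keys by blast
lemma node_V': "k \<in> Keys \<Longrightarrow> i \<le> M \<Longrightarrow> nodeK k i \<in> V'" unfolding V'_def by blast

lemma V'_cases: "v \<in> V' \<Longrightarrow> (\<And>k i. k \<in> Keys \<Longrightarrow> i \<le> M \<Longrightarrow> v = nodeK k i \<Longrightarrow> P) \<Longrightarrow> P"
  unfolding V'_def by blast

lemma node0: "k \<in> Keys \<Longrightarrow> nodeK k 0 = rho \<or> nodeK k 0 \<in> VG"
  by (erule Keys_cases) (auto simp: nodeK_def headK_def rho_def idxinj)

lemma iter: "k \<in> Keys \<Longrightarrow> (p' ^^ i) (nodeK k i) = nodeK k 0"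
proof (induction i)
  case 0 thus ?case by simp
next
  case (Suc i)
  have "(p' ^^ Suc i) (nodeK k (Suc i)) = (p' ^^ i) (p' (nodeK k (Suc i)))"
    by (simp add: funpow_Suc_right del: funpow.simps)
  also have "\<dots> = nodeK k 0" using p'_succ[OF Suc.prems] Suc.IH[OF Suc.prems] by simp
  finally show ?case .
qed

lemma reachG: "g \<in> VG \<Longrightarrow> \<exists>n. (p' ^^ n) g = rho"
proof (induction "depth r p g" arbitrary: g rule: less_induct)
  case less
  have gV: "g \<in> V" using less.prems VGV by blast
  have k: "keyO (gpT g) \<in> Keys" using keyO_gpT[OF gV] .
  have "(p' ^^ Suc (pos g)) g = (p' ^^ pos g) (p' g)"
    by (simp add: funpow_Suc_right del: funpow.simps)
  also have "\<dots> = nodeK (keyO (gpT g)) 0" using p'_VG[OF less.prems] iter[OF k] by simp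
  finally have e: "(p' ^^ Suc (pos g)) g = nodeK (keyO (gpT g)) 0" .
  show ?case
  proof (cases "gpT g")
    case None
    hence "(p' ^^ Suc (pos g)) g = rho" using e rho_node by simp
    thus ?thesis by blast
  next
    case (Some g')
    have g': "g' \<in> VG" "depth r p g' < depth r p g" using gpT_Some[OF gV Some] by auto
    obtain n where n: "(p' ^^ n) g' = rho" using less.hyps[OF g'(2) g'(1)] by blast
    have "nodeK (keyO (gpT g)) 0 = g'" using Some g'(1) headK_Some[of g'] by (simp add: nodeK_def)
    have "(p' ^^ (n + Suc (pos g))) g = (p' ^^ n) ((p' ^^ Suc (pos g)) g)"
      by (simp only: funpow_add comp_apply)
    hence "(p' ^^ (n + Suc (pos g))) g = rho" using e n \<open>nodeK (keyO (gpT g)) 0 = g'\<close> by simp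
    thus ?thesis by blast
  qed
qed

lemma T': "rooted_tree V' rho p'"
  unfolding rooted_tree_def
proof (intro conjI ballI)
  show "finite V'" by (rule finV')
  show "rho \<in> V'" by (rule rho_V')
next
  fix v assume v: "v \<in> V' - {rho}"
  then obtain k i where ki: "k \<in> Keys" "i \<le> M" "v = nodeK k i" by (auto elim: V'_cases)
  show "p' v \<in> V'"
  proof (cases i)
    case (Suc j) thus ?thesis using ki p'_succ node_V' by auto
  next
    case 0
    hence vG: "v \<in> VG" using node0[OF ki(1)] ki v by auto
    hence "v \<in> V" using VGV by blast
    thus ?thesis using p'_VG[OF vG] keyO_gpT node_V' pos_lt_M[OF vG] by simp
  qed
next
  fix v assume v: "v \<in> V'"
  then obtain k i where ki: "k \<in> Keys" "i \<le> M" "v = nodeK k i" by (auto elim: V'_cases)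
  have e: "(p' ^^ i) v = nodeK k 0" using iter[OF ki(1)] ki by simp
  show "\<exists>n. (p' ^^ n) v = rho"
  proof (cases "nodeK k 0 = rho")
    case True hence "(p' ^^ i) v = rho" using e by simp
    thus ?thesis by blast
  next
    case False
    hence "nodeK k 0 \<in> VG" using node0[OF ki(1)] by blast
    then obtain n where "(p' ^^ n) (nodeK k 0) = rho" using reachG by blast
    moreover have "(p' ^^ (n + i)) v = (p' ^^ n) ((p' ^^ i) v)"
      by (simp only: funpow_add comp_apply)
    ultimately have "(p' ^^ (n + i)) v = rho" using e by simp
    thus ?thesis by blast
  qed
qed

end

context constr begin

lemma child_succ: "k \<in> Keys \<Longrightarrow> Suc i \<le> M \<Longrightarrow> is_child V' rho p' (nodeK k i) (nodeK k (Suc i))"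
  unfolding is_child_def using node_V' p'_succ nodeK_inj[of k 0 "Suc i" 0] zero_Keys rho_node
  by auto

lemma child_VG: "g \<in> VG \<Longrightarrow> is_child V' rho p' (nodeK (keyO (gpT g)) (pos g)) g"
  unfolding is_child_def using VG_V' p'_VG rho_notVG by auto

lemma nonleaf_lt: assumes k: "k \<in> Keys" and nl: "\<not> is_leaf V' rho p' (nodeK k i)" shows "i < M"
proof -
  obtain w where w: "w \<in> V'" "w \<noteq> rho" "p' w = nodeK k i"
    using nl unfolding is_leaf_def is_child_def by blast
  obtain k' i' where ki: "k' \<in> Keys" "i' \<le> M" "w = nodeK k' i'" using w(1) by (auto elim: V'_cases)
  show ?thesis
  proof (cases i')
    case (Suc j)
    hence "nodeK k' j = nodeK k i" using w ki p'_succ by simp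
    hence "j = i" using nodeK_inj[OF ki(1) k] by blast
    thus ?thesis using Suc ki by simp
  next
    case 0
    hence wG: "w \<in> VG" using node0[OF ki(1)] ki w by auto
    hence "w \<in> V" using VGV by blast
    hence "nodeK (keyO (gpT w)) (pos w) = nodeK k i" using w p'_VG[OF wG] by simp
    thus ?thesis using nodeK_inj[OF keyO_gpT[OF \<open>w \<in> V\<close>] k] pos_lt_M[OF wG] by auto
  qed
qed

lemma burl2: "v \<in> V' \<Longrightarrow> \<not> is_leaf V' rho p' v \<Longrightarrow> is_child V' rho p' v (l' v)"
  by (erule V'_cases) (metis Suc_leI child_succ l'_node nonleaf_lt)

lemma lb_char: assumes v: "v \<in> V'" shows "v \<in> VG \<longleftrightarrow> v \<noteq> rho \<and> \<not> is_last_born V' rho p' l' v"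
proof
  assume vG: "v \<in> VG"
  have "\<not> is_last_born V' rho p' l' v"
  proof
    assume "is_last_born V' rho p' l' v"
    then obtain u where u: "u \<in> V'" "v = l' u" unfolding is_last_born_def by blast
    then obtain k i where "k \<in> Keys" "u = nodeK k i" by (auto elim: V'_cases)
    hence "v = nodeK k (Suc i)" using u l'_node by simp
    thus False using vG nodeK_VG \<open>k \<in> Keys\<close> by auto
  qed
  thus "v \<noteq> rho \<and> \<not> is_last_born V' rho p' l' v" using vG rho_notVG by auto
next
  assume a: "v \<noteq> rho \<and> \<not> is_last_born V' rho p' l' v"
  obtain k i where ki: "k \<in> Keys" "i \<le> M" "v = nodeK k i" using v by (auto elim: V'_cases)
  show "v \<in> VG"
  proof (cases i)
    case 0 thus ?thesis using node0[OF ki(1)] ki a by auto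
  next
    case (Suc j)
    have c: "is_child V' rho p' (nodeK k j) v" using child_succ[OF ki(1)] ki Suc by simp
    hence "\<not> is_leaf V' rho p' (nodeK k j)" unfolding is_leaf_def by blast
    moreover have "nodeK k j \<in> V'" using node_V' ki Suc by simp
    moreover have "l' (nodeK k j) = v" using l'_node[OF ki(1)] ki Suc by simp
    ultimately have "is_last_born V' rho p' l' v" unfolding is_last_born_def by blast
    thus ?thesis using a by blast
  qed
qed

end

context constr begin

lemma conv_VG: "1 \<le> s \<Longrightarrow> set (conv h s xs) \<inter> VG = set xs \<inter> VG"
proof (induction xs arbitrary: h s)
  case Nil thus ?case by simp
next
  case (Cons x xs)
  have nv: "nodeK k i \<notin> VG" if "1 \<le> i" for k i
    using that by (auto simp: nodeK_def fresh)
  show ?case using Cons.IH[of 1 "Some x"] Cons.IH[OF Cons.prems] nv Cons.prems by auto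
qed

definition pre :: "'a option \<Rightarrow> nat \<Rightarrow> 'a list \<Rightarrow> bool" where
  "pre h s xs \<longleftrightarrow> successively (is_child V r p) xs \<and> set xs \<subseteq> V \<and>
     (xs \<noteq> [] \<longrightarrow> hd xs \<noteq> r \<and> gpT (hd xs) = h \<and> 1 \<le> s \<and> s \<le> pos (hd xs)) \<and>
     h \<in> {None} \<union> Some ` VG"

lemma pos_bounds: "2 * depth r p x \<le> pos x" "pos x \<le> Suc (2 * depth r p x)"
  unfolding pos_def by auto

lemma pre_tail_VG: assumes "pre h s (x # xs)" "x \<in> VG" shows "pre (Some x) 1 xs"
proof -
  have s: "successively (is_child V r p) xs" and sub: "set xs \<subseteq> V"
    using assms(1) unfolding pre_def by (auto simp: successively_Cons)
  have "gpT (hd xs) = Some x \<and> 1 \<le> pos (hd xs) \<and> hd xs \<noteq> r" if ne: "xs \<noteq> []"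
  proof -
    have c: "is_child V r p x (hd xs)" using assms(1) ne unfolding pre_def by (simp add: successively_Cons)
    hence "hd xs \<in> V" "hd xs \<noteq> r" "p (hd xs) = x" unfolding is_child_def by auto
    moreover have "depth r p (hd xs) = Suc (depth r p x)" using depth_child[OF T c] .
    ultimately show ?thesis using gpT_rec assms(2) pos_bounds(1)[of "hd xs"] by auto
  qed
  thus ?thesis using s sub assms(2) unfolding pre_def by auto
qed

lemma pre_tail_nVG: assumes "pre h s (x # xs)" "x \<notin> VG" shows "pre h s xs"
proof -
  have s: "successively (is_child V r p) xs" and sub: "set xs \<subseteq> V" and h: "h \<in> {None} \<union> Some ` VG"
    and hx: "gpT x = h" "1 \<le> s" "s \<le> pos x" and xV: "x \<in> V" and xr: "x \<noteq> r"
    using assms(1) unfolding pre_def by (auto simp: successively_Cons)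
  have "gpT (hd xs) = h \<and> s \<le> pos (hd xs) \<and> hd xs \<noteq> r" if ne: "xs \<noteq> []"
  proof -
    have c: "is_child V r p x (hd xs)" using assms(1) ne unfolding pre_def by (simp add: successively_Cons)
    hence "hd xs \<in> V" "hd xs \<noteq> r" "p (hd xs) = x" unfolding is_child_def by auto
    moreover have "depth r p (hd xs) = Suc (depth r p x)" using depth_child[OF T c] .
    ultimately show ?thesis using gpT_rec assms(2) pos_bounds(1)[of "hd xs"] pos_bounds(2)[of x] hx
      by auto
  qed
  thus ?thesis using s sub h hx unfolding pre_def by auto
qed

lemma conv_ok: "pre h s xs \<Longrightarrow> set (conv h s xs) \<subseteq> V' \<and> successively (is_child V' rho p') (conv h s xs)
   \<and> (conv h s xs \<noteq> [] \<longrightarrow> hd (conv h s xs) = nodeK (keyO h) s)"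
proof (induction xs arbitrary: h s)
  case Nil thus ?case by simp
next
  case (Cons x xs)
  show ?case
  proof (cases "x \<in> VG")
    case False
    thus ?thesis using Cons.IH[OF pre_tail_nVG[OF Cons.prems False]] by simp
  next
    case xG: True
    define k where "k = keyO h"
    define seg where "seg = map (nodeK k) [s..<Suc (pos x)]"
    define tl where "tl = conv (Some x) 1 xs"
    have IH: "set tl \<subseteq> V'" "successively (is_child V' rho p') tl" "tl \<noteq> [] \<Longrightarrow> hd tl = nodeK (keyO (Some x)) 1"
      using Cons.IH[OF pre_tail_VG[OF Cons.prems xG]] unfolding tl_def by auto
    have k: "k \<in> Keys" and hx: "gpT x = h" "1 \<le> s" "s \<le> pos x"
      using Cons.prems keyO_Keys unfolding pre_def k_def by auto
    have pM: "pos x < M" using pos_lt_M[OF xG] .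
    have eq: "conv h s (x # xs) = seg @ x # tl" using xG unfolding seg_def tl_def k_def by simp
    have segne: "seg \<noteq> []" using hx unfolding seg_def by simp
    have "[s..<Suc (pos x)] = s # [Suc s..<Suc (pos x)]" using hx by (intro upt_conv_Cons) simp
    hence hdseg: "hd seg = nodeK k s" unfolding seg_def by simp
    have lastseg: "last seg = nodeK k (pos x)" using hx unfolding seg_def by (simp add: last_map)
    have segV: "set seg \<subseteq> V'" unfolding seg_def using node_V'[OF k] pM by auto
    have segs: "successively (is_child V' rho p') seg" unfolding seg_def
      by (rule successively_map_upt) (use child_succ[OF k] pM in auto)
    have c1: "is_child V' rho p' (last seg) x" using child_VG[OF xG] hx lastseg k_def by simp
    have c2: "is_child V' rho p' x (hd tl)" if "tl \<noteq> []"
      using child_succ[OF VG_Keys[OF xG], of 0] IH(3)[OF that] VG_node[OF xG] pM by simp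
    have s2: "successively (is_child V' rho p') (x # tl)"
      using IH(2) c2 by (cases "tl = []") (auto simp: successively_Cons)
    show ?thesis unfolding eq using segne hdseg segV IH(1) VG_V'[OF xG] segs s2 c1
      by (auto simp: successively_append_iff k_def)
  qed
qed

lemma conv_depth: "pre h s xs \<Longrightarrow> a \<in> set xs \<inter> VG \<Longrightarrow> b \<in> set xs \<inter> VG \<Longrightarrow>
   (depth r p a \<le> depth r p b) = (depth rho p' a \<le> depth rho p' b)"
proof (induction xs arbitrary: h s)
  case Nil thus ?case by simp
next
  case (Cons x xs)
  show ?case
  proof (cases "x \<in> VG")
    case False
    thus ?thesis using Cons.IH[OF pre_tail_nVG[OF Cons.prems(1) False]] Cons.prems by auto
  next
    case xG: True
    have pt: "pre (Some x) 1 xs" using pre_tail_VG[OF Cons.prems(1) xG] .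
    define tl where "tl = conv (Some x) 1 xs"
    have ok: "successively (is_child V' rho p') tl" "tl \<noteq> [] \<Longrightarrow> hd tl = nodeK (keyO (Some x)) 1"
      using conv_ok[OF pt] unfolding tl_def by auto
    have c2: "is_child V' rho p' x (hd tl)" if "tl \<noteq> []"
      using child_succ[OF VG_Keys[OF xG], of 0] ok(2)[OF that] VG_node[OF xG] pos_lt_M[OF xG] by simp
    have s2: "successively (is_child V' rho p') (x # tl)"
      using ok(1) c2 by (cases "tl = []") (auto simp: successively_Cons)
    have s1: "successively (is_child V r p) (x # xs)" using Cons.prems(1) unfolding pre_def by simp
    have tlVG: "set tl \<inter> VG = set xs \<inter> VG" unfolding tl_def by (rule conv_VG) simp
    have lt: "depth r p x < depth r p z \<and> depth rho p' x < depth rho p' z" if "z \<in> set xs \<inter> VG" for z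
      using path_depth_less[OF T s1] path_depth_less[OF T' s2] that tlVG by blast
    show ?thesis
    proof (cases "a = x")
      case True
      thus ?thesis using lt[of b] Cons.prems by (cases "b = x") auto
    next
      case False
      hence a: "a \<in> set xs \<inter> VG" using Cons.prems by auto
      show ?thesis
      proof (cases "b = x")
        case True thus ?thesis using lt[OF a] by auto
      next
        case False
        hence "b \<in> set xs \<inter> VG" using Cons.prems by auto
        thus ?thesis using Cons.IH[OF pt a] by blast
      qed
    qed
  qed
qed

end


lemma succ_set: "successively (is_child V r p) (x # xs) \<Longrightarrow> set xs \<subseteq> V"
proof (induction xs arbitrary: x)
  case Nil thus ?case by simp
next
  case (Cons y xs) thus ?case unfolding is_child_def by (auto simp: successively_Cons)
qed

context constr begin

lemma B2: "v \<in> V \<Longrightarrow> \<not> is_leaf V r p v \<Longrightarrow> is_child V r p v (l v)"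
  using B unfolding burling_tree_def by blast
lemma B3: "v \<in> V \<Longrightarrow> (if v = r \<or> is_last_born V r p l v then c v = {}
                 else is_branch_set V r p (l (p v)) (c v))"
  using B unfolding burling_tree_def by blast

lemma blist_prop: assumes v: "v \<in> V"
  shows "set (blist v) = c v \<and> (blist v \<noteq> [] \<longrightarrow> hd (blist v) = l (p v) \<and>
    successively (is_child V r p) (blist v) \<and> l (p v) \<in> V)"
proof -
  have "\<exists>xs. set xs = c v \<and> (xs \<noteq> [] \<longrightarrow> hd xs = l (p v) \<and>
    successively (is_child V r p) xs \<and> l (p v) \<in> V)"
  proof (cases "v = r \<or> is_last_born V r p l v")
    case True thus ?thesis using B3[OF v] by (intro exI[of _ "[]"]) simp
  next
    case False
    hence "is_branch_set V r p (l (p v)) (c v)" using B3[OF v] by simp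
    thus ?thesis unfolding is_branch_set_def
      by (metis empty_set successively_conv_nth)
  qed
  thus ?thesis unfolding blist_def by (rule someI_ex)
qed

lemma pre_blist: assumes vG: "v \<in> VG" and ne: "c v \<noteq> {}"
  shows "pre (gpT v) (Suc (pos v)) (blist v)"
proof -
  have v: "v \<in> V" using vG VGV by blast
  have nr: "v \<noteq> r" and nlb: "\<not> is_last_born V r p l v" using B3[OF v] ne by (auto split: if_splits)
  define xs where "xs = blist v"
  have xsne: "xs \<noteq> []" using blist_prop[OF v] ne xs_def by auto
  have hd: "hd xs = l (p v)" and s: "successively (is_child V r p) xs" and aV: "l (p v) \<in> V"
    using blist_prop[OF v] xsne xs_def by auto
  have pv: "p v \<in> V" using pV[OF v nr] .
  have cpv: "is_child V r p (p v) v" using v nr unfolding is_child_def by simp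
  hence nl: "\<not> is_leaf V r p (p v)" unfolding is_leaf_def by blast
  have ca: "is_child V r p (p v) (l (p v))" using B2[OF pv nl] .
  have ar: "l (p v) \<noteq> r" and pa: "p (l (p v)) = p v" using ca unfolding is_child_def by auto
  have alb: "is_last_born V r p l (l (p v))" unfolding is_last_born_def using pv nl by blast
  have da: "depth r p (l (p v)) = depth r p v"
    using depth_child[OF T ca] depth_child[OF T cpv] by simp
  have posa: "pos (l (p v)) = Suc (pos v)" unfolding pos_def using alb nlb da by simp
  have gp: "gpT (l (p v)) = gpT v" using gpT_rec[OF aV ar] gpT_rec[OF v nr] pa by simp
  have sub: "set xs \<subseteq> V"
    using succ_set[of V r p "hd xs" "tl xs"] s xsne hd aV by (cases xs) auto
  show ?thesis unfolding pre_def xs_def[symmetric]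
    using s sub xsne hd ar posa gp gpT_range[OF v] by auto
qed

lemma c'_VG: "u \<in> VG \<Longrightarrow> c' u \<inter> VG = c u \<inter> VG"
  unfolding c'_def using conv_VG[of "Suc (pos u)" "gpT u" "blist u"] blist_prop VGV by auto

lemma burl': "burling_tree V' rho p' l' c'"
  unfolding burling_tree_def
proof (intro conjI ballI impI)
  show "rooted_tree V' rho p'" by (rule T')
next
  fix v assume "v \<in> V'" "\<not> is_leaf V' rho p' v"
  thus "is_child V' rho p' v (l' v)" by (rule burl2)
next
  fix v assume v: "v \<in> V'"
  show "if v = rho \<or> is_last_born V' rho p' l' v then c' v = {}
        else is_branch_set V' rho p' (l' (p' v)) (c' v)"
  proof (cases "v \<in> VG")
    case False thus ?thesis using lb_char[OF v] by (auto simp: c'_def)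
  next
    case vG: True
    have vV: "v \<in> V" using vG VGV by blast
    have nb: "\<not> (v = rho \<or> is_last_born V' rho p' l' v)" using lb_char[OF v] vG by simp
    have "is_branch_set V' rho p' (l' (p' v)) (c' v)"
    proof (cases "c v = {}")
      case True
      hence "blist v = []" using blist_prop[OF vV] by simp
      thus ?thesis unfolding c'_def is_branch_set_def using vG by simp
    next
      case False
      define ys where "ys = conv (gpT v) (Suc (pos v)) (blist v)"
      have ok: "set ys \<subseteq> V'" "successively (is_child V' rho p') ys"
        "ys \<noteq> [] \<Longrightarrow> hd ys = nodeK (keyO (gpT v)) (Suc (pos v))"
        using conv_ok[OF pre_blist[OF vG False]] ys_def by auto
      have lp: "l' (p' v) = nodeK (keyO (gpT v)) (Suc (pos v))"
        using p'_VG[OF vG] l'_node[OF keyO_gpT[OF vV]] by simp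
      have cv: "c' v = set ys" unfolding c'_def ys_def using vG by simp
      show ?thesis
      proof (cases "ys = []")
        case True thus ?thesis unfolding is_branch_set_def cv by simp
      next
        case False
        hence "l' (p' v) \<in> V'" using ok lp by (cases ys) auto
        thus ?thesis unfolding is_branch_set_def cv using False ok lp
          by (metis successively_conv_nth)
      qed
    qed
    thus ?thesis using nb by simp
  qed
qed

lemma der': "derived VG AG V' rho p' l' c'"
proof -
  have AG: "AG = {(u, v). u \<in> VG \<and> v \<in> VG \<and> v \<in> c u}" using D unfolding derived_def by simp
  have "VG \<subseteq> V'" using VG_V' by blast
  moreover have "AG = {(u, v). u \<in> VG \<and> v \<in> VG \<and> v \<in> c' u}"
  proof -
    have "(u \<in> VG \<and> v \<in> VG \<and> v \<in> c u) = (u \<in> VG \<and> v \<in> VG \<and> v \<in> c' u)" for u v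
      using c'_VG[of u] by blast
    thus ?thesis using AG by simp
  qed
  ultimately show ?thesis unfolding derived_def by simp
qed

lemma arcs': assumes uv: "(u, v) \<in> AG"
  shows "(top_arc AG r p u v \<longleftrightarrow> top_arc AG rho p' u v)
       \<and> (bottom_arc AG r p u v \<longleftrightarrow> bottom_arc AG rho p' u v)"
proof -
  have AG: "AG = {(u, v). u \<in> VG \<and> v \<in> VG \<and> v \<in> c u}" using D unfolding derived_def by simp
  have uG: "u \<in> VG" and vc: "v \<in> c u \<inter> VG" using uv AG by auto
  have uV: "u \<in> V" using uG VGV by blast
  have pr: "pre (gpT u) (Suc (pos u)) (blist u)" using pre_blist[OF uG] vc by blast
  have sb: "set (blist u) = c u" using blist_prop[OF uV] by simp
  have eq: "(depth r p a \<le> depth r p b) = (depth rho p' a \<le> depth rho p' b)"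
    if "(u, a) \<in> AG" "(u, b) \<in> AG" for a b
    using conv_depth[OF pr, of a b] that AG sb by auto
  show ?thesis unfolding top_arc_def bottom_arc_def using eq uv by blast
qed

lemma main: "burling_tree V' rho p' l' c' \<and> derived VG AG V' rho p' l' c'
     \<and> (\<forall>v \<in> V'. v \<in> VG \<longleftrightarrow> (v \<noteq> rho \<and> \<not> is_last_born V' rho p' l' v))
     \<and> (\<forall>u v. (u, v) \<in> AG \<longrightarrow>
           (top_arc AG r p u v \<longleftrightarrow> top_arc AG rho p' u v)
         \<and> (bottom_arc AG r p u v \<longleftrightarrow> bottom_arc AG rho p' u v))"
  using burl' der' lb_char arcs' by blast

end

theorem lemma3p5:
  fixes V :: "'a set" and r :: 'a and p l :: "'a \<Rightarrow> 'a" and c :: "'a \<Rightarrow> 'a set"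
    and VG :: "'a set" and AG :: "('a \<times> 'a) set"
  assumes "infinite (UNIV :: 'a set)"
    and "burling_tree V r p l c"
    and "derived VG AG V r p l c"
  shows "\<exists>V' r' p' l' c'. burling_tree V' r' p' l' c' \<and> derived VG AG V' r' p' l' c'
     \<and> (\<forall>v \<in> V'. v \<in> VG \<longleftrightarrow> (v \<noteq> r' \<and> \<not> is_last_born V' r' p' l' v))
     \<and> (\<forall>u v. (u, v) \<in> AG \<longrightarrow>
           (top_arc AG r p u v \<longleftrightarrow> top_arc AG r' p' u v)
         \<and> (bottom_arc AG r p u v \<longleftrightarrow> bottom_arc AG r' p' u v))"
proof -
  have finVG: "finite VG" using assms(2,3) unfolding burling_tree_def rooted_tree_def derived_def
    using finite_subset by blast
  have "infinite (UNIV - VG)" using assms(1) finVG by (simp add: Diff_infinite_finite)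
  then obtain f :: "nat \<Rightarrow> 'a" where f: "inj f" "range f \<subseteq> UNIV - VG"
    using infinite_countable_subset by blast
  obtain idx :: "'a \<Rightarrow> nat" and n where idx: "inj_on idx VG"
    using finite_imp_inj_to_nat_seg[OF finVG] by blast
  interpret constr V r p l c VG AG f idx
    using assms(2,3) f idx by unfold_locales auto
  show ?thesis by (rule exI[where x=V'], rule exI[where x=rho], rule exI[where x=p'],
     rule exI[where x=l'], rule exI[where x=c'], rule main)
qed

end
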